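(* Let $M\in\mathbb{N}_0$ and $N\in\mathbb{N}$ with $N\le\lfloor M/2\rfloor+1$. Let $U_{(N,M)}\in\mathbb{R}^{N\times N}$ be the upper triangular matrix with entries $(U_{(N,M)})_{N-\ell,N-\ell-k}=0$ for $1\le k\le N-1-\ell$, and $$(U_{(N,M)})_{N-\ell,N-\ell+k}=\frac{1}{(2k+1)2^{2k}}\binom{M-2\ell+2k}{2k},\qquad 0\le k\le\ell,$$ for $0\le\ell\le N-1$ (so the diagonal entries, $k=0$, equal $1$). Then $U_{(N,M)}^{-1}$ is upper unitriangular with entries $(U^{-1}_{(N,M)})_{N-\ell,N-\ell-k}=0$ for $1\le k\le N-1-\ell$ and $$(U^{-1}_{(N,M)})_{N-\ell,N-\ell+k}=\tau_{2k}\frac{(M-2\ell+2k)!}{(M-2\ell)!},\qquad 0\le k\le\ell,\ 0\le\ell\le N-1,$$ where $\tau_0=1$ and $\tau_{2k}=\sum_{s=0}^{k-1}\frac{-\tau_{2s}}{2^{2k-2s}(2k-2s+1)!}$ for $k>0$. *)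

theory Defs
  imports Complex_Main "Jordan_Normal_Form.Matrix"
begin

text \<open>tau k stands for the paper's tau_{2k}.\<close>
fun tau :: "nat \<Rightarrow> real" where
  "tau k = (if k = 0 then 1
            else (\<Sum>s<k. - tau s / (2 ^ (2*k - 2*s) * fact (2*k - 2*s + 1))))"

text \<open>Matrices are 0-indexed: row i (0 \<le> i < N) is the paper's row i+1,
  so the paper's row N - l is i = N - 1 - l, and column N - l + k is j = i + k.\<close>
definition U_mat :: "nat \<Rightarrow> nat \<Rightarrow> real mat" where
  "U_mat N M = mat N N (\<lambda>(i,j).
     if j < i then 0
     else (let l = N - 1 - i; k = j - i in
           1 / ((2 * real k + 1) * 2 ^ (2*k)) * real ((M - 2*l + 2*k) choose (2*k))))"

definition Uinv_mat :: "nat \<Rightarrow> nat \<Rightarrow> real mat" where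
  "Uinv_mat N M = mat N N (\<lambda>(i,j).
     if j < i then 0
     else (let l = N - 1 - i; k = j - i in
           tau k * fact (M - 2*l + 2*k) / fact (M - 2*l)))"

end

theory Submission
  imports Defs
begin

declare tau.simps[simp del]

definition cc :: "nat \<Rightarrow> real" where
  "cc k = 1 / (2 ^ (2*k) * fact (2*k+1))"

lemma conv1: "(\<Sum>s\<in>{0..k}. tau s * cc (k - s)) = (if k = 0 then 1 else 0)"
proof (cases "k = 0")
  case True
  then show ?thesis by (simp add: cc_def tau.simps)
next
  case False
  have t: "tau k = - (\<Sum>s<k. tau s * cc (k - s))"
    apply (subst tau.simps)
    using False
    by (simp add: sum_negf[symmetric] cc_def diff_mult_distrib2[symmetric] del: sum_negf)
  have "{0..k} = insert k {..<k}" by auto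
  then have "(\<Sum>s\<in>{0..k}. tau s * cc (k - s)) = tau k * cc 0 + (\<Sum>s<k. tau s * cc (k - s))"
    by simp
  also have "\<dots> = 0" using t by (simp add: cc_def)
  finally show ?thesis using False by simp
qed

lemma conv2: "(\<Sum>s\<in>{0..k}. cc s * tau (k - s)) = (if k = 0 then 1 else 0)"
proof -
  have "(\<Sum>s\<in>{0..k}. cc s * tau (k - s)) = (\<Sum>s\<in>{0..k}. cc (k + 0 - s) * tau (k - (k + 0 - s)))"
    by (rule sum.atLeastAtMost_rev)
  also have "\<dots> = (\<Sum>s\<in>{0..k}. tau s * cc (k - s))"
    by (rule sum.cong) auto
  finally show ?thesis using conv1 by simp
qed

lemma U_entry:
  assumes "i \<le> j" "j < N" "2 * N \<le> M + 2"
  shows "U_mat N M $$ (i,j) = fact (M + 2*j + 2 - 2*N) / fact (M + 2*i + 2 - 2*N) * cc (j - i)"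
proof -
  define k where "k = j - i"
  define a where "a = M + 2*i + 2 - 2*N"
  have e1: "M - 2*(N-1-i) + 2*(j-i) = M + 2*j + 2 - 2*N" using assms by auto
  have e2: "M + 2*j + 2 - 2*N - 2*k = a" using assms unfolding k_def a_def by auto
  have le: "2*k \<le> M + 2*j + 2 - 2*N" using assms unfolding k_def by auto
  have U0: "U_mat N M $$ (i,j) = 1 / ((2 * real (j-i) + 1) * 2 ^ (2*(j-i))) * real ((M - 2*(N-1-i) + 2*(j-i)) choose (2*(j-i)))"
    using assms unfolding U_mat_def Let_def by simp
  have U: "U_mat N M $$ (i,j) = 1 / ((2 * real k + 1) * 2 ^ (2*k)) * real ((M + 2*j + 2 - 2*N) choose (2*k))"
    using U0 unfolding e1 k_def .
  have b: "real ((M + 2*j + 2 - 2*N) choose (2*k)) = fact (M + 2*j + 2 - 2*N) / (fact (2*k) * fact a)"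
    using binomial_fact[OF le, where 'a=real] e2 by simp
  have f: "fact (2*k+1) = (2 * real k + 1) * (fact (2*k) :: real)"
    by (simp add: fact_Suc)
  show ?thesis unfolding U b cc_def f a_def[symmetric] k_def[symmetric]
    by (simp add: field_simps)
qed

lemma Uinv_entry:
  assumes "i \<le> j" "j < N" "2 * N \<le> M + 2"
  shows "Uinv_mat N M $$ (i,j) = fact (M + 2*j + 2 - 2*N) / fact (M + 2*i + 2 - 2*N) * tau (j - i)"
proof -
  have e1: "M - 2*(N-1-i) + 2*(j-i) = M + 2*j + 2 - 2*N" using assms by auto
  have e2: "M - 2*(N-1-i) = M + 2*i + 2 - 2*N" using assms by auto
  have U0: "Uinv_mat N M $$ (i,j) = tau (j-i) * fact (M - 2*(N-1-i) + 2*(j-i)) / fact (M - 2*(N-1-i))"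
    using assms unfolding Uinv_mat_def Let_def by simp
  show ?thesis using U0 unfolding e1 unfolding e2 by simp
qed

lemma zero_entries:
  assumes "j < i" "i < N"
  shows "U_mat N M $$ (i,j) = 0" "Uinv_mat N M $$ (i,j) = 0"
  using assms unfolding U_mat_def Uinv_mat_def by auto

lemma dims[simp]: "dim_row (U_mat N M) = N" "dim_col (U_mat N M) = N"
  "dim_row (Uinv_mat N M) = N" "dim_col (Uinv_mat N M) = N"
  unfolding U_mat_def Uinv_mat_def by auto

lemma sum_window:
  fixes i j N :: nat
  assumes "j < N"
  shows "(\<Sum>m\<in>{0..<N}. if i \<le> m \<and> m \<le> j then h m else 0) = (\<Sum>m\<in>{i..j}. (h m :: real))"
proof -
  have "(\<Sum>m\<in>{0..<N}. if i \<le> m \<and> m \<le> j then h m else 0) = (\<Sum>m\<in>{0..<N}. if m \<in> {i..j} then h m else 0)"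
    by (rule sum.cong) auto
  also have "\<dots> = (\<Sum>m\<in>{0..<N} \<inter> {i..j}. h m)"
    by (rule sum.inter_restrict[symmetric]) simp
  also have "{0..<N} \<inter> {i..j} = {i..j}" using assms by auto
  finally show ?thesis .
qed

lemma shift_sum: "(i::nat) \<le> j \<Longrightarrow> (\<Sum>m\<in>{i..j}. (h m :: real)) = (\<Sum>t\<in>{0..j-i}. h (i + t))"
proof -
  assume "i \<le> j"
  then have "{i..j} = {0+i..(j-i)+i}" by auto
  then have "sum h {i..j} = sum h {0+i..(j-i)+i}" by simp
  also have "\<dots> = (\<Sum>t\<in>{0..j-i}. h (t + i))" by (rule sum.shift_bounds_cl_nat_ivl)
  finally show ?thesis by (simp add: add.commute)
qed

lemma cancel_aux: "(a::real) \<noteq> 0 \<Longrightarrow> b \<noteq> 0 \<Longrightarrow> a / b * c * (d / a * e) = d / b * (c * e)"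
  by (simp add: field_simps)

lemma prod1:
  assumes "2 * N \<le> M + 2"
  shows "U_mat N M * Uinv_mat N M = 1\<^sub>m N"
proof (rule eq_matI)
  fix i j assume ij: "i < dim_row (1\<^sub>m N)" "j < dim_col (1\<^sub>m N)"
  then have i: "i < N" and j: "j < N" by auto
  let ?F = "\<lambda>x. fact (M + 2*x + 2 - 2*N) :: real"
  have "(U_mat N M * Uinv_mat N M) $$ (i,j) = (\<Sum>m\<in>{0..<N}. U_mat N M $$ (i,m) * Uinv_mat N M $$ (m,j))"
    using i j by (simp add: scalar_prod_def)
  also have "\<dots> = (\<Sum>m\<in>{0..<N}. if i \<le> m \<and> m \<le> j then ?F j / ?F i * (cc (m - i) * tau (j - m)) else 0)"
  proof (rule sum.cong)
    fix m assume "m \<in> {0..<N}"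
    then have m: "m < N" by simp
    show "U_mat N M $$ (i,m) * Uinv_mat N M $$ (m,j) = (if i \<le> m \<and> m \<le> j then ?F j / ?F i * (cc (m - i) * tau (j - m)) else 0)"
    proof (cases "i \<le> m \<and> m \<le> j")
      case True
      have e1: "U_mat N M $$ (i,m) = ?F m / ?F i * cc (m - i)" using U_entry[of i m N M] True m assms by simp
      have e2: "Uinv_mat N M $$ (m,j) = ?F j / ?F m * tau (j - m)" using Uinv_entry[of m j N M] True j assms by simp
      show ?thesis unfolding e1 e2 using True by (simp add: cancel_aux)
    next
      case False
      then show ?thesis using zero_entries[of m i N M] zero_entries[of j m N M] m i
        by (auto simp: not_le)
    qed
  qed simp
  also have "\<dots> = 1\<^sub>m N $$ (i,j)"
  proof (cases "i \<le> j")
    case True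
    have "(\<Sum>m\<in>{i..j}. ?F j / ?F i * (cc (m - i) * tau (j - m))) = ?F j / ?F i * (\<Sum>t\<in>{0..j-i}. cc t * tau (j - i - t))"
      unfolding shift_sum[OF True] by (simp add: sum_distrib_left)
    then show ?thesis using sum_window[OF j] True i j conv2[of "j - i"] by simp
  next
    case False
    then show ?thesis using i j by (subst sum.neutral) auto
  qed
  finally show "(U_mat N M * Uinv_mat N M) $$ (i,j) = 1\<^sub>m N $$ (i,j)" .
qed auto

lemma prod2:
  assumes "2 * N \<le> M + 2"
  shows "Uinv_mat N M * U_mat N M = 1\<^sub>m N"
proof (rule eq_matI)
  fix i j assume ij: "i < dim_row (1\<^sub>m N)" "j < dim_col (1\<^sub>m N)"
  then have i: "i < N" and j: "j < N" by auto
  let ?F = "\<lambda>x. fact (M + 2*x + 2 - 2*N) :: real"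
  have "(Uinv_mat N M * U_mat N M) $$ (i,j) = (\<Sum>m\<in>{0..<N}. Uinv_mat N M $$ (i,m) * U_mat N M $$ (m,j))"
    using i j by (simp add: scalar_prod_def)
  also have "\<dots> = (\<Sum>m\<in>{0..<N}. if i \<le> m \<and> m \<le> j then ?F j / ?F i * (tau (m - i) * cc (j - m)) else 0)"
  proof (rule sum.cong)
    fix m assume "m \<in> {0..<N}"
    then have m: "m < N" by simp
    show "Uinv_mat N M $$ (i,m) * U_mat N M $$ (m,j) = (if i \<le> m \<and> m \<le> j then ?F j / ?F i * (tau (m - i) * cc (j - m)) else 0)"
    proof (cases "i \<le> m \<and> m \<le> j")
      case True
      have e1: "Uinv_mat N M $$ (i,m) = ?F m / ?F i * tau (m - i)" using Uinv_entry[of i m N M] True m assms by simp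
      have e2: "U_mat N M $$ (m,j) = ?F j / ?F m * cc (j - m)" using U_entry[of m j N M] True j assms by simp
      show ?thesis unfolding e1 e2 using True by (simp add: cancel_aux)
    next
      case False
      then show ?thesis using zero_entries[of m i N M] zero_entries[of j m N M] m i
        by (auto simp: not_le)
    qed
  qed simp
  also have "\<dots> = 1\<^sub>m N $$ (i,j)"
  proof (cases "i \<le> j")
    case True
    have "(\<Sum>m\<in>{i..j}. ?F j / ?F i * (tau (m - i) * cc (j - m))) = ?F j / ?F i * (\<Sum>t\<in>{0..j-i}. tau t * cc (j - i - t))"
      unfolding shift_sum[OF True] by (simp add: sum_distrib_left)
    then show ?thesis using sum_window[OF j] True i j conv1[of "j - i"] by simp
  next
    case False
    then show ?thesis using i j by (subst sum.neutral) auto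
  qed
  finally show "(Uinv_mat N M * U_mat N M) $$ (i,j) = 1\<^sub>m N $$ (i,j)" .
qed auto

theorem lemma5:
  fixes N M :: nat
  assumes "1 \<le> N" and "N \<le> M div 2 + 1"
  shows "invertible_mat (U_mat N M) \<and>
         inverts_mat (U_mat N M) (Uinv_mat N M) \<and>
         inverts_mat (Uinv_mat N M) (U_mat N M)"
proof -
  have h: "2 * N \<le> M + 2" using assms(2) by linarith
  have a: "inverts_mat (U_mat N M) (Uinv_mat N M)" using prod1[OF h] by (simp add: inverts_mat_def)
  have b: "inverts_mat (Uinv_mat N M) (U_mat N M)" using prod2[OF h] by (simp add: inverts_mat_def)
  have "invertible_mat (U_mat N M)" unfolding invertible_mat_def using a b by (auto simp: square_mat.simps)
  with a b show ?thesis by simp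
qed

end
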